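(* Let $\lambda>0$ and let $\{x_n\}$ be a sequence of positive real numbers satisfying $$\lim_{n\to\infty}x_n=0\quad\text{and}\quad\lim_{n\to\infty}\frac{\ln x_n}{\sum_{i=1}^nx_i^\lambda}=-b<0.$$ Then $$\lim_{n\to\infty}\frac{\ln x_n}{\ln n}=-\frac1\lambda.$$ *)

theory Defs
  imports "HOL-Analysis.Analysis"
begin

end

theory Submission
  imports Defs
begin

lemma incr_upper:
  fixes f :: "nat \<Rightarrow> real"
  assumes "\<And>n. n \<ge> N \<Longrightarrow> f (Suc n) - f n \<le> D" and "n \<ge> N"
  shows "f n \<le> f N + D * (real n - real N)"
  using assms(2)
proof (induction n rule: dec_induct)
  case base then show ?case by simp
next
  case (step n) then show ?case using assms(1)[of n] by (simp add: algebra_simps)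
qed

lemma incr_lower:
  fixes f :: "nat \<Rightarrow> real"
  assumes "\<And>n. n \<ge> N \<Longrightarrow> f (Suc n) - f n \<ge> D" and "n \<ge> N"
  shows "f n \<ge> f N + D * (real n - real N)"
  using assms(2)
proof (induction n rule: dec_induct)
  case base then show ?case by simp
next
  case (step n) then show ?case using assms(1)[of n] by (simp add: algebra_simps)
qed

lemma ln_ratio_small: "((\<lambda>n. C / ln (real n)) \<longlongrightarrow> 0) sequentially"
  by (intro tendsto_divide_0[OF tendsto_const] filterlim_at_top_imp_at_infinity
      filterlim_compose[OF ln_at_top filterlim_real_sequentially])

lemma mid_lemma: "(p::real) < q \<Longrightarrow> 0 < p \<Longrightarrow> 0 < (p+q)/2 \<and> (p+q)/2 < q \<and> p < (p+q)/2"
  by auto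

lemma mid_lemma2: "(p::real) < q \<Longrightarrow> 0 < p \<Longrightarrow> 0 < (p+q)/2 \<and> p < (p+q)/2 \<and> (p+q)/2 < q"
  by auto

theorem lemma8:
  fixes x :: "nat \<Rightarrow> real" and lambda b :: real
  assumes "lambda > 0"
    and "\<And>n. n \<ge> 1 \<Longrightarrow> x n > 0"
    and "x \<longlonglongrightarrow> 0"
    and "b > 0"
    and "(\<lambda>n. ln (x n) / (\<Sum>i=1..n. x i powr lambda)) \<longlonglongrightarrow> - b"
  shows "(\<lambda>n. ln (x n) / ln (real n)) \<longlonglongrightarrow> - 1 / lambda"
proof -
  define c where "c = lambda * b"
  define y where "y n = x n powr lambda" for n
  define S where "S n = (\<Sum>i=1..n. y i)" for n
  have c_pos: "c > 0" using assms(1,4) by (simp add: c_def)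
  have y_pos: "y n > 0" if "n \<ge> 1" for n using assms(2)[OF that] by (simp add: y_def)
  have S_pos: "S n > 0" if "n \<ge> 1" for n
    unfolding S_def using that by (intro sum_pos) (auto intro: y_pos)
  have S_Suc: "S (Suc n) = S n + y (Suc n)" for n
    unfolding S_def by (simp add: sum.cl_ivl_Suc)
  have lny: "ln (y n) = lambda * ln (x n)" if "n \<ge> 1" for n
    using assms(2)[OF that] by (simp add: y_def ln_powr)
  have L0: "(\<lambda>n. ln (x n) / S n) \<longlonglongrightarrow> - b"
    using assms(5) by (simp add: S_def y_def)
  have L1: "(\<lambda>n. ln (y n) / S n) \<longlonglongrightarrow> - c"
  proof -
    have "(\<lambda>n. lambda * (ln (x n) / S n)) \<longlonglongrightarrow> lambda * (-b)"
      by (rule tendsto_mult[OF tendsto_const L0])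
    moreover have "eventually (\<lambda>n. lambda * (ln (x n) / S n) = ln (y n) / S n) sequentially"
      using eventually_ge_at_top[of 1] by eventually_elim (simp add: lny)
    ultimately have "(\<lambda>n. ln (y n) / S n) \<longlonglongrightarrow> lambda * (-b)"
      by (rule Lim_transform_eventually)
    then show ?thesis by (simp add: c_def)
  qed
  have y1: "eventually (\<lambda>n. y n \<le> 1) sequentially"
  proof -
    have "eventually (\<lambda>n. x n < 1) sequentially"
      using order_tendstoD(2)[OF assms(3), of 1] by simp
    then show ?thesis using eventually_ge_at_top[of 1]
    proof eventually_elim
      case (elim n)
      then show ?case using assms(1) assms(2)[of n] unfolding y_def
        by (intro powr_le1) auto
    qed
  qed
  have main: "(\<lambda>n. S n / ln (real n)) \<longlonglongrightarrow> 1 / c"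
  proof (rule order_tendstoI)
    fix u assume u: "1 / c < u"
    define a where "a = (1/u + c) / 2"
    have u_pos: "u > 0" using u c_pos by (smt (verit) divide_pos_pos)
    have "1/u < c" using u c_pos u_pos by (simp add: field_simps)
    moreover have "1/u > 0" using u_pos by simp
    ultimately have a_pos: "0 < a" and ac: "a < c" and au0: "1/u < a"
      unfolding atomize_conj a_def by (rule mid_lemma)
    have au: "1/a < u" using au0 a_pos u_pos by (simp add: field_simps)
    have "eventually (\<lambda>n. ln (y n) / S n < - a) sequentially"
      using order_tendstoD(2)[OF L1, of "-a"] ac by simp
    then obtain N0 where N0: "\<And>n. n \<ge> N0 \<Longrightarrow> ln (y n) / S n < - a"
      by (auto simp: eventually_sequentially)
    define N where "N = max N0 1"
    have inc: "exp (a * S (Suc n)) - exp (a * S n) \<le> a" if "n \<ge> N" for n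
    proof -
      have m: "Suc n \<ge> N0" "Suc n \<ge> 1" using that N_def by auto
      have Sm: "S (Suc n) > 0" using S_pos[OF m(2)] .
      have "ln (y (Suc n)) < -a * S (Suc n)"
        using N0[OF m(1)] Sm by (simp add: pos_divide_less_eq)
      then have "exp (ln (y (Suc n))) < exp (-a * S (Suc n))" by simp
      then have yb: "y (Suc n) < exp (-a * S (Suc n))" using y_pos[OF m(2)] by simp
      have e: "1 + (a * S n - a * S (Suc n)) \<le> exp (a * S n - a * S (Suc n))"
        by (rule exp_ge_add_one_self)
      have "(1 + (a * S n - a * S (Suc n))) * exp (a * S (Suc n))
            \<le> exp (a * S n - a * S (Suc n)) * exp (a * S (Suc n))"
        by (rule mult_right_mono[OF e]) simp
      also have "\<dots> = exp (a * S n)" by (simp add: exp_diff)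
      finally have conv: "exp (a * S (Suc n)) - exp (a * S n)
          \<le> a * y (Suc n) * exp (a * S (Suc n))" by (simp add: S_Suc algebra_simps)
      also have "\<dots> \<le> a * exp (-a * S (Suc n)) * exp (a * S (Suc n))"
        using yb a_pos by (intro mult_right_mono mult_left_mono) auto
      also have "\<dots> = a" by (simp add: exp_minus field_simps)
      finally show ?thesis .
    qed
    define K where "K = exp (a * S N)"
    have Kpos: "K > 0" by (simp add: K_def)
    have bound: "exp (a * S n) \<le> K + a * (real n - real N)" if "n \<ge> N" for n
      using incr_upper[where f="\<lambda>n. exp (a * S n)" and N=N and D=a and n=n] inc that unfolding K_def by blast
    have "eventually (\<lambda>n. ln (a + K) / a / ln (real n) < u - 1/a) sequentially"
      using order_tendstoD(2)[OF ln_ratio_small[of "ln (a + K) / a"], of "u - 1/a"] au by simp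
    then obtain N1 where N1: "\<And>n. n \<ge> N1 \<Longrightarrow> ln (a + K) / a / ln (real n) < u - 1/a"
      by (auto simp: eventually_sequentially)
    show "eventually (\<lambda>n. S n / ln (real n) < u) sequentially"
      unfolding eventually_sequentially
    proof (intro exI allI impI)
      fix n assume n: "max (max N N1) 2 \<le> n"
      have rn: "real n \<ge> 2" using n by linarith
      have ln_pos: "ln (real n) > 0" using rn by (intro ln_gt_zero) simp
      have "exp (a * S n) \<le> K + a * (real n - real N)" using bound n by auto
      also have "\<dots> \<le> (a + K) * real n"
      proof -
        have "K * 1 \<le> K * real n" using Kpos rn by (intro mult_left_mono) auto
        moreover have "a * real N \<ge> 0" using a_pos by simp
        ultimately show ?thesis by (simp add: algebra_simps)
      qed
      finally have "a * S n \<le> ln ((a + K) * real n)"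
        using a_pos Kpos rn by (subst ln_ge_iff) auto
      also have "\<dots> = ln (a + K) + ln (real n)"
        using a_pos Kpos rn by (simp add: ln_mult)
      finally have "S n \<le> (ln (a + K) + ln (real n)) / a"
        using a_pos by (simp add: field_simps)
      then have "S n / ln (real n) \<le> (ln (a + K) + ln (real n)) / a / ln (real n)"
        using ln_pos by (intro divide_right_mono) auto
      also have "\<dots> = ln (a + K) / a / ln (real n) + 1 / a"
        using ln_pos a_pos by (simp add: field_simps)
      also have "\<dots> < u" using N1[of n] n by simp
      finally show "S n / ln (real n) < u" .
    qed
  next
    fix l assume l: "l < 1 / c"
    show "eventually (\<lambda>n. l < S n / ln (real n)) sequentially"
    proof (cases "l \<le> 0")
      case True
      show ?thesis using eventually_ge_at_top[of 2]
      proof eventually_elim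
        case (elim n)
        then have "real n > 1" by simp
        then have "ln (real n) > 0" by (intro ln_gt_zero) simp
        moreover have "S n > 0" using S_pos elim by simp
        ultimately show ?case using True by (smt (verit) divide_pos_pos)
      qed
    next
      case False
      then have l_pos: "l > 0" by simp
      define a where "a = (c + 1/l) / 2"
      have "c < 1/l" using l l_pos c_pos by (simp add: field_simps)
      then have a_pos: "0 < a" and ac: "c < a" and al0: "a < 1/l" using c_pos
        unfolding atomize_conj a_def by (rule mid_lemma2)
      have al: "l < 1/a" using al0 a_pos l_pos by (simp add: field_simps)
      have "eventually (\<lambda>n. - a < ln (y n) / S n) sequentially"
        using order_tendstoD(1)[OF L1, of "-a"] ac by simp
      then have "eventually (\<lambda>n. - a < ln (y n) / S n \<and> y n \<le> 1) sequentially"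
        using y1 by eventually_elim simp
      then obtain N0 where N0: "\<And>n. n \<ge> N0 \<Longrightarrow> - a < ln (y n) / S n \<and> y n \<le> 1"
        by (auto simp: eventually_sequentially)
      define N where "N = max N0 1"
      define d where "d = a * exp (- a)"
      have d_pos: "d > 0" using a_pos by (simp add: d_def)
      have inc: "exp (a * S (Suc n)) - exp (a * S n) \<ge> d" if "n \<ge> N" for n
      proof -
        have m: "Suc n \<ge> N0" "Suc n \<ge> 1" using that N_def by auto
        have Sm: "S (Suc n) > 0" using S_pos[OF m(2)] .
        have "-a * S (Suc n) < ln (y (Suc n))"
          using N0[OF m(1)] Sm by (simp add: pos_less_divide_eq)
        then have "exp (-a * S (Suc n)) < exp (ln (y (Suc n)))" by simp
        then have yb: "exp (-a * S (Suc n)) < y (Suc n)" using y_pos[OF m(2)] by simp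
        have y1': "y (Suc n) \<le> 1" using N0[OF m(1)] by simp
        have e: "1 + (a * S (Suc n) - a * S n) \<le> exp (a * S (Suc n) - a * S n)"
          by (rule exp_ge_add_one_self)
        have "(1 + (a * S (Suc n) - a * S n)) * exp (a * S n)
              \<le> exp (a * S (Suc n) - a * S n) * exp (a * S n)"
          by (rule mult_right_mono[OF e]) simp
        also have "\<dots> = exp (a * S (Suc n))" by (simp add: exp_diff)
        finally have conv: "a * y (Suc n) * exp (a * S n)
            \<le> exp (a * S (Suc n)) - exp (a * S n)" by (simp add: S_Suc algebra_simps)
        have eq: "exp (a * S n) = exp (a * S (Suc n)) * exp (- a * y (Suc n))"
          by (simp add: S_Suc algebra_simps flip: exp_add)
        have p1: "y (Suc n) * exp (a * S (Suc n)) \<ge> 1"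
        proof -
          have "1 = exp (-a * S (Suc n)) * exp (a * S (Suc n))" by (simp add: exp_minus)
          also have "\<dots> \<le> y (Suc n) * exp (a * S (Suc n))"
            using yb by (intro mult_right_mono) auto
          finally show ?thesis .
        qed
        have p2: "exp (- a * y (Suc n)) \<ge> exp (- a)"
          using y1' a_pos by (simp add: mult_left_le)
        have "d = a * 1 * exp (- a)" by (simp add: d_def)
        also have "\<dots> \<le> a * (y (Suc n) * exp (a * S (Suc n))) * exp (- a * y (Suc n))"
          using p1 p2 a_pos by (intro mult_mono mult_left_mono) auto
        also have "\<dots> = a * y (Suc n) * exp (a * S n)" by (simp add: eq)
        finally show ?thesis using conv by simp
      qed
      have bound: "exp (a * S n) \<ge> d * (real n - real N)" if "n \<ge> N" for n
        using incr_lower[where f="\<lambda>n. exp (a * S n)" and N=N and D=d and n=n] inc that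
        by (smt (verit) exp_gt_zero)
      have "eventually (\<lambda>n. l - 1/a < ln (d / 2) / a / ln (real n)) sequentially"
        using order_tendstoD(1)[OF ln_ratio_small[of "ln (d / 2) / a"], of "l - 1/a"] al by simp
      then obtain N1 where N1: "\<And>n. n \<ge> N1 \<Longrightarrow> l - 1/a < ln (d / 2) / a / ln (real n)"
        by (auto simp: eventually_sequentially)
      show ?thesis
        unfolding eventually_sequentially
      proof (intro exI allI impI)
        fix n assume n: "max (2 * N + 2) N1 \<le> n"
        have rn: "real n \<ge> 2" using n by linarith
        have rnN: "real n \<ge> 2 * real N" using n by linarith
        have ln_pos: "ln (real n) > 0" using rn by (intro ln_gt_zero) simp
        have "d / 2 * real n \<le> d * (real n - real N)"
        proof -
          have "0 \<le> d * (real n / 2 - real N)" using rnN d_pos by (intro mult_nonneg_nonneg) auto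
          then show ?thesis by (simp add: algebra_simps)
        qed
        also have "\<dots> \<le> exp (a * S n)" using bound n by auto
        finally have "ln (d / 2 * real n) \<le> ln (exp (a * S n))"
          using d_pos rn by (subst ln_le_cancel_iff) auto
        moreover have "ln (d / 2 * real n) = ln (d / 2) + ln (real n)"
          using d_pos rn by (subst ln_mult) auto
        ultimately have "ln (d / 2) + ln (real n) \<le> a * S n" by simp
        then have "(ln (d / 2) + ln (real n)) / a \<le> S n"
          using a_pos by (simp add: field_simps)
        then have "(ln (d / 2) + ln (real n)) / a / ln (real n) \<le> S n / ln (real n)"
          using ln_pos by (intro divide_right_mono) auto
        moreover have "(ln (d / 2) + ln (real n)) / a / ln (real n)
            = ln (d / 2) / a / ln (real n) + 1 / a"
          using ln_pos a_pos by (simp add: field_simps)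
        moreover have "l < ln (d / 2) / a / ln (real n) + 1 / a" using N1[of n] n by simp
        ultimately show "l < S n / ln (real n)" by linarith
      qed
    qed
  qed
  have "(\<lambda>n. (ln (x n) / S n) * (S n / ln (real n))) \<longlonglongrightarrow> (- b) * (1 / c)"
    by (rule tendsto_mult[OF L0 main])
  moreover have "eventually (\<lambda>n. (ln (x n) / S n) * (S n / ln (real n)) = ln (x n) / ln (real n)) sequentially"
    using eventually_ge_at_top[of 1]
  proof eventually_elim
    case (elim n)
    then have "S n \<noteq> 0" using S_pos[of n] by simp
    then show ?case by simp
  qed
  ultimately have "(\<lambda>n. ln (x n) / ln (real n)) \<longlonglongrightarrow> (- b) * (1 / c)"
    by (rule Lim_transform_eventually)
  moreover have "(- b) * (1 / c) = - 1 / lambda"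
    using assms(1,4) by (simp add: c_def)
  ultimately show ?thesis by simp
qed

end
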